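(* Let $(F,G)\in\mathcal H_{\mathbf d}[q\,;\,s]$ and $D=\max_i d_i$. For any $r>0$, $\mathcal U_{\mathbb S}\big(S(F,G),D^{-1/2}r\big)\subseteq\mathsf{Approx}(F,G,r)$.
   Context: $\mathcal H_{\mathbf d}[q\,;\,s]$: pairs $(F,G)$, $F=(f_1,\dots,f_q)$, $G=(g_1,\dots,g_s)$, of real homogeneous polynomials in $X_0,\dots,X_n$ of degrees $d_1,\dots,d_{q+s}$; each polynomial $h$ has the Weyl norm $\|h\|$ where $\|h\|^2=\sum_{|a|=d}\binom da^{-1}h_a^2$ ($h_a$ coefficients, $\binom da$ multinomial). $S(F,G)=\{x\in\mathbb S^n: f_i(x)=0\ \forall i,\ g_j(x)\geq0\ \forall j\}$. For $A\subseteq\mathbb S^n$, $\mathcal U_{\mathbb S}(A,r)=\{x\in\mathbb S^n: d_{\mathbb S}(x,A)<r\}$ with $d_{\mathbb S}$ the geodesic distance. $\mathsf{Approx}(F,G,r)=\{x\in\mathbb S^n:\ |f(x)|<\|f\|r\ \forall f\in F,\ g(x)>-\|g\|r\ \forall g\in G\}$. *)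

theory Defs
  imports "HOL-Analysis.Analysis"
begin

text \<open>Real homogeneous polynomials in the variables X_i, i ranging over the finite
  index type 'n (so CARD('n) = n+1 variables X_0..X_n), represented by a degree d
  and a coefficient function on multi-indices a :: 'n => nat with |a| = d.\<close>

type_synonym 'n hpoly = "nat \<times> (('n \<Rightarrow> nat) \<Rightarrow> real)"

definition monomials_deg :: "nat \<Rightarrow> ('n::finite \<Rightarrow> nat) set" where
  "monomials_deg d = {a. sum a UNIV = d}"

definition hdeg :: "'n hpoly \<Rightarrow> nat" where "hdeg h = fst h"

definition hcoeff :: "'n hpoly \<Rightarrow> ('n \<Rightarrow> nat) \<Rightarrow> real" where "hcoeff h = snd h"

definition multinom :: "nat \<Rightarrow> ('n::finite \<Rightarrow> nat) \<Rightarrow> real" where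
  "multinom d a = fact d / (\<Prod>i\<in>UNIV. fact (a i))"

definition heval :: "('n::finite) hpoly \<Rightarrow> real ^ 'n \<Rightarrow> real" where
  "heval h x = (\<Sum>a\<in>monomials_deg (hdeg h). hcoeff h a * (\<Prod>i\<in>UNIV. (x $ i) ^ a i))"

definition weyl_norm :: "('n::finite) hpoly \<Rightarrow> real" where
  "weyl_norm h = sqrt (\<Sum>a\<in>monomials_deg (hdeg h). (hcoeff h a)\<^sup>2 / multinom (hdeg h) a)"

definition hzero :: "('n::finite) hpoly \<Rightarrow> bool" where
  "hzero h \<longleftrightarrow> (\<forall>a\<in>monomials_deg (hdeg h). hcoeff h a = 0)"

definition sphere_n :: "(real ^ 'n::finite) set" where
  "sphere_n = {x. norm x = 1}"

definition dS :: "real ^ 'n::finite \<Rightarrow> real ^ 'n \<Rightarrow> real" where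
  "dS x y = arccos (x \<bullet> y)"

text \<open>Open r-neighbourhood: d_S(x,A) = inf_{y in A} d_S(x,y) < r, with inf of the empty set = infinity.\<close>
definition U_S :: "(real ^ 'n::finite) set \<Rightarrow> real \<Rightarrow> (real ^ 'n) set" where
  "U_S A r = {x \<in> sphere_n. \<exists>y\<in>A. dS x y < r}"

definition SFG :: "('n::finite) hpoly list \<Rightarrow> 'n hpoly list \<Rightarrow> (real ^ 'n) set" where
  "SFG F G = {x \<in> sphere_n. (\<forall>f\<in>set F. heval f x = 0) \<and> (\<forall>g\<in>set G. heval g x \<ge> 0)}"

definition Approx :: "('n::finite) hpoly list \<Rightarrow> 'n hpoly list \<Rightarrow> real \<Rightarrow> (real ^ 'n) set" where
  "Approx F G r = {x \<in> sphere_n. (\<forall>f\<in>set F. \<bar>heval f x\<bar> < weyl_norm f * r) \<and>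
                                  (\<forall>g\<in>set G. heval g x > - (weyl_norm g * r))}"

end

theory Submission imports Defs begin

definition mdeg :: "'n set \<Rightarrow> nat \<Rightarrow> ('n \<Rightarrow> nat) set" where
  "mdeg I d = {a. (\<forall>i. i \<notin> I \<longrightarrow> a i = 0) \<and> sum a I = d}"

lemma finite_mdeg:
  assumes "finite I" shows "finite (mdeg I d)"
proof -
  have "mdeg I d \<subseteq> (\<lambda>f i. if i \<in> I then f i else 0) ` (PiE I (\<lambda>_. {..d}))"
  proof
    fix a assume a: "a \<in> mdeg I d"
    have "restrict a I \<in> PiE I (\<lambda>_. {..d})"
      using a assms by (auto simp: mdeg_def intro!: member_le_sum)
    moreover have "a = (\<lambda>i. if i \<in> I then restrict a I i else 0)"
      using a by (auto simp: mdeg_def)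
    ultimately show "a \<in> (\<lambda>f i. if i \<in> I then f i else 0) ` (PiE I (\<lambda>_. {..d}))" by blast
  qed
  moreover have "finite (PiE I (\<lambda>_. {..d}))" using assms by (simp add: finite_PiE)
  ultimately show ?thesis by (meson finite_imageI finite_subset)
qed

lemma mdeg_empty: "mdeg {} d = (if d = 0 then {\<lambda>_. 0} else {})"
  by (auto simp: mdeg_def)

lemma multinomial_set:
  fixes u :: "'n \<Rightarrow> real"
  assumes "finite I"
  shows "(\<Sum>i\<in>I. u i)^d = (\<Sum>a\<in>mdeg I d. fact d / (\<Prod>i\<in>I. fact (a i)) * (\<Prod>i\<in>I. u i ^ a i))"
  using assms
proof (induction I arbitrary: d rule: finite_induct)
  case empty
  then show ?case by (simp add: mdeg_empty)
next
  case (insert j I)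
  let ?T = "\<lambda>k b. of_nat (d choose k) * u j ^ k * (fact (d - k) / (\<Prod>i\<in>I. fact (b i)) * (\<Prod>i\<in>I. u i ^ b i))"
  have "(\<Sum>i\<in>insert j I. u i)^d = (u j + (\<Sum>i\<in>I. u i))^d"
    using insert by simp
  also have "\<dots> = (\<Sum>k\<le>d. of_nat (d choose k) * u j ^ k * (\<Sum>i\<in>I. u i) ^ (d - k))"
    by (rule binomial_ring)
  also have "\<dots> = (\<Sum>k\<le>d. \<Sum>b\<in>mdeg I (d - k). ?T k b)"
    by (simp add: insert.IH sum_distrib_left)
  also have "\<dots> = (\<Sum>(k,b)\<in>Sigma {..d} (\<lambda>k. mdeg I (d - k)). ?T k b)"
    by (rule sum.Sigma) (auto intro: finite_mdeg insert.hyps)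
  also have "\<dots> = (\<Sum>a\<in>mdeg (insert j I) d. fact d / (\<Prod>i\<in>insert j I. fact (a i)) * (\<Prod>i\<in>insert j I. u i ^ a i))"
  proof (rule sum.reindex_bij_witness[where i = "\<lambda>a. (a j, a(j:=0))" and j = "\<lambda>(k,b). b(j:=k)"])
    fix kb assume kb: "kb \<in> Sigma {..d} (\<lambda>k. mdeg I (d - k))"
    obtain k b where kbd: "kb = (k,b)" by force
    have k: "k \<le> d" and b: "\<forall>i. i \<notin> I \<longrightarrow> b i = 0" "sum b I = d - k"
      using kb kbd by (auto simp: mdeg_def)
    have bj: "b j = 0" using b insert.hyps by auto
    have sI: "sum (b(j:=k)) I = sum b I"
      by (rule sum.cong) (use insert.hyps in auto)
    have pI1: "(\<Prod>i\<in>I. fact ((b(j:=k)) i)) = (\<Prod>i\<in>I. fact (b i) :: real)"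
      by (rule prod.cong) (use insert.hyps in auto)
    have pI2: "(\<Prod>i\<in>I. u i ^ ((b(j:=k)) i)) = (\<Prod>i\<in>I. u i ^ b i)"
      by (rule prod.cong) (use insert.hyps in auto)
    show "(\<lambda>a. (a j, a(j:=0))) ((\<lambda>(k,b). b(j:=k)) kb) = kb"
      using kbd bj by auto
    show "(\<lambda>(k,b). b(j:=k)) kb \<in> mdeg (insert j I) d"
      using kbd b k insert.hyps sI by (auto simp: mdeg_def)
    have P: "(\<Prod>i\<in>I. fact (b i) :: real) \<noteq> 0" by (rule order.strict_implies_not_eq[symmetric], rule prod_pos) simp
    show "fact d / (\<Prod>i\<in>insert j I. fact (((\<lambda>(k,b). b(j:=k)) kb) i)) *
          (\<Prod>i\<in>insert j I. u i ^ (((\<lambda>(k,b). b(j:=k)) kb) i)) = (case kb of (k,b) \<Rightarrow> ?T k b)"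
      using kbd insert.hyps pI1 pI2 P k
      by (simp add: binomial_fact field_simps)
  next
    fix a assume a: "a \<in> mdeg (insert j I) d"
    have az: "\<forall>i. i \<notin> insert j I \<longrightarrow> a i = 0" and as: "a j + sum a I = d"
      using a insert.hyps by (auto simp: mdeg_def)
    have sI: "sum (a(j:=0)) I = sum a I"
      by (rule sum.cong) (use insert.hyps in auto)
    show "(\<lambda>(k,b). b(j:=k)) ((\<lambda>a. (a j, a(j:=0))) a) = a" by auto
    show "(\<lambda>a. (a j, a(j:=0))) a \<in> Sigma {..d} (\<lambda>k. mdeg I (d - k))"
      using az as sI by (auto simp: mdeg_def)
  qed
  finally show ?case .
qed

definition Mon :: "('n::finite \<Rightarrow> nat) \<Rightarrow> real^'n \<Rightarrow> real" where
  "Mon a x = (\<Prod>i\<in>UNIV. (x $ i) ^ a i)"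

lemma kernel:
  fixes z w :: "real^'n::finite"
  shows "(\<Sum>a\<in>monomials_deg d. multinom d a * Mon a z * Mon a w) = (z \<bullet> w) ^ d"
proof -
  have "(z \<bullet> w) ^ d = (\<Sum>i\<in>UNIV. z$i * w$i) ^ d"
    by (simp add: inner_vec_def)
  also have "\<dots> = (\<Sum>a\<in>mdeg UNIV d. fact d / (\<Prod>i\<in>UNIV. fact (a i)) * (\<Prod>i\<in>UNIV. (z$i * w$i) ^ a i))"
    by (rule multinomial_set) simp
  also have "\<dots> = (\<Sum>a\<in>monomials_deg d. multinom d a * Mon a z * Mon a w)"
    by (rule sum.cong) (auto simp: mdeg_def monomials_deg_def multinom_def Mon_def power_mult_distrib prod.distrib)
  finally show ?thesis by simp
qed

definition pt :: "real^'n::finite \<Rightarrow> real^'n \<Rightarrow> real \<Rightarrow> real^'n" where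
  "pt y v t = cos t *\<^sub>R y + sin t *\<^sub>R v"

definition DM :: "real^'n::finite \<Rightarrow> real^'n \<Rightarrow> ('n \<Rightarrow> nat) \<Rightarrow> real \<Rightarrow> real" where
  "DM y v a t = (\<Sum>i\<in>UNIV. (real (a i) * (pt y v t $ i) ^ (a i - 1) * (- sin t * y$i + cos t * v$i))
       * (\<Prod>j\<in>UNIV-{i}. (pt y v t $ j) ^ a j))"

lemma DM_deriv: "((\<lambda>t. Mon a (pt y v t)) has_field_derivative DM y v a t) (at t)"
proof -
  have "((\<lambda>t. \<Prod>i\<in>UNIV. (\<lambda>i t. (cos t * y$i + sin t * v$i) ^ a i) i t) has_field_derivative
     (\<Sum>i\<in>UNIV. (real (a i) * (cos t * y$i + sin t * v$i) ^ (a i - 1) * (- sin t * y$i + cos t * v$i))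
       * (\<Prod>j\<in>UNIV-{i}. (\<lambda>i t. (cos t * y$i + sin t * v$i) ^ a i) j t))) (at t)"
    by (rule has_field_derivative_prod) (auto intro!: derivative_eq_intros simp: algebra_simps)
  then show ?thesis by (simp add: Mon_def DM_def pt_def)
qed

lemma pt_inner:
  assumes "norm y = 1" "norm v = 1" "y \<bullet> v = 0"
  shows "pt y v t \<bullet> pt y v s = cos (t - s)"
proof -
  have yy: "y \<bullet> y = 1" and vv: "v \<bullet> v = 1" using assms by (simp_all add: dot_square_norm)
  have vy: "v \<bullet> y = 0" using assms by (simp add: inner_commute)
  show ?thesis
    by (simp add: pt_def inner_add_left inner_add_right yy vv vy assms(3) cos_diff)
qed

lemma DM_sq:
  assumes "norm y = 1" "norm v = 1" "y \<bullet> v = 0"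
  shows "(\<Sum>a\<in>monomials_deg d. multinom d a * (DM y v a t)^2) = real d"
proof -
  have K: "(\<Sum>a\<in>monomials_deg d. multinom d a * Mon a (pt y v t) * Mon a (pt y v s)) = cos (t - s) ^ d" for t s
    using kernel pt_inner[OF assms] by metis
  have K1: "(\<Sum>a\<in>monomials_deg d. multinom d a * DM y v a t * Mon a (pt y v s))
        = real d * cos (t - s) ^ (d - 1) * (- sin (t - s))" for t s
  proof -
    have D1: "((\<lambda>t. \<Sum>a\<in>monomials_deg d. multinom d a * Mon a (pt y v t) * Mon a (pt y v s)) has_field_derivative
        (\<Sum>a\<in>monomials_deg d. multinom d a * DM y v a t * Mon a (pt y v s))) (at t)"
      by (intro DERIV_sum DERIV_cmult_right DERIV_cmult DM_deriv)
    have D2: "((\<lambda>t. cos (t - s) ^ d) has_field_derivative real d * cos (t - s) ^ (d - 1) * (- sin (t - s))) (at t)"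
      by (rule derivative_eq_intros refl)+ simp
    have E: "(\<lambda>t. \<Sum>a\<in>monomials_deg d. multinom d a * Mon a (pt y v t) * Mon a (pt y v s)) = (\<lambda>t. cos (t - s) ^ d)"
      using K by (intro ext) blast
    show ?thesis using DERIV_unique[OF D1[unfolded E] D2] .
  qed
  have D2: "((\<lambda>s. \<Sum>a\<in>monomials_deg d. multinom d a * DM y v a t * Mon a (pt y v s)) has_field_derivative
        (\<Sum>a\<in>monomials_deg d. multinom d a * DM y v a t * DM y v a t)) (at t)"
    by (intro DERIV_sum DERIV_cmult DM_deriv)
  have D3: "((\<lambda>s. real d * cos (t - s) ^ (d - 1) * (- sin (t - s))) has_field_derivative real d) (at t)"
    by (rule derivative_eq_intros refl)+ simp
  have E2: "(\<lambda>s. \<Sum>a\<in>monomials_deg d. multinom d a * DM y v a t * Mon a (pt y v s)) =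
        (\<lambda>s. real d * cos (t - s) ^ (d - 1) * (- sin (t - s)))"
    using K1 by blast
  then have "(\<Sum>a\<in>monomials_deg d. multinom d a * DM y v a t * DM y v a t) = real d"
    using DERIV_unique[OF D2[unfolded E2] D3] by simp
  then show ?thesis by (simp add: power2_eq_square mult.assoc)
qed

lemma multinom_pos: "multinom d a > 0"
  unfolding multinom_def by (intro divide_pos_pos prod_pos) auto

lemma finite_monomials_deg: "finite (monomials_deg d :: ('n::finite \<Rightarrow> nat) set)"
proof -
  have "monomials_deg d = mdeg (UNIV::'n set) d" by (auto simp: mdeg_def monomials_deg_def)
  then show ?thesis using finite_mdeg[of "UNIV::'n set"] by simp
qed

lemma heval_Mon: "heval h x = (\<Sum>a\<in>monomials_deg (hdeg h). hcoeff h a * Mon a x)"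
  by (simp add: heval_def Mon_def)

lemma CS_weyl:
  fixes h :: "('n::finite) hpoly" and X :: "('n \<Rightarrow> nat) \<Rightarrow> real"
  shows "\<bar>\<Sum>a\<in>monomials_deg (hdeg h). hcoeff h a * X a\<bar>
     \<le> weyl_norm h * sqrt (\<Sum>a\<in>monomials_deg (hdeg h). multinom (hdeg h) a * (X a)^2)"
proof -
  let ?M = "monomials_deg (hdeg h)" and ?m = "multinom (hdeg h)" and ?c = "hcoeff h"
  have eq: "(\<Sum>a\<in>?M. ?c a * X a) = (\<Sum>a\<in>?M. (?c a / sqrt (?m a)) * (sqrt (?m a) * X a))"
  proof (intro sum.cong refl)
    fix a :: "'n \<Rightarrow> nat" have "sqrt (?m a) > 0" using multinom_pos by simp
    then show "?c a * X a = (?c a / sqrt (?m a)) * (sqrt (?m a) * X a)" by (simp add: field_simps)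
  qed
  have sq1: "(?c a / sqrt (?m a))^2 = ?c a ^2 / ?m a" for a
    using multinom_pos[of "hdeg h" a] by (simp add: power_divide)
  have sq2: "(sqrt (?m a) * X a)^2 = ?m a * X a ^2" for a
    using multinom_pos[of "hdeg h" a] by (simp add: power_mult_distrib)
  have "(\<Sum>a\<in>?M. ?c a * X a)^2 \<le> (\<Sum>a\<in>?M. ?c a ^2 / ?m a) * (\<Sum>a\<in>?M. ?m a * X a ^2)"
    using Cauchy_Schwarz_ineq_sum[of "\<lambda>a. ?c a / sqrt (?m a)" "\<lambda>a. sqrt (?m a) * X a" ?M]
    unfolding eq sq1 sq2 .
  then have "sqrt ((\<Sum>a\<in>?M. ?c a * X a)^2) \<le> sqrt ((\<Sum>a\<in>?M. ?c a ^2 / ?m a) * (\<Sum>a\<in>?M. ?m a * X a ^2))"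
    by (rule real_sqrt_le_mono)
  then show ?thesis by (simp add: weyl_norm_def real_sqrt_mult)
qed

lemma weyl_norm_nonneg: "weyl_norm h \<ge> 0"
  unfolding weyl_norm_def using multinom_pos by (auto intro!: sum_nonneg divide_nonneg_pos)

lemma heval_bound:
  assumes "norm z = 1"
  shows "\<bar>heval h z\<bar> \<le> weyl_norm h"
proof -
  have "(\<Sum>a\<in>monomials_deg (hdeg h). multinom (hdeg h) a * (Mon a z)^2) = (z \<bullet> z) ^ hdeg h"
    using kernel[of "hdeg h" z z] by (simp add: power2_eq_square mult.assoc)
  also have "\<dots> = 1" using assms by (simp add: dot_square_norm)
  finally show ?thesis using CS_weyl[of h "\<lambda>a. Mon a z"] by (simp add: heval_Mon)
qed

lemma deriv_bound:
  assumes "norm y = 1" "norm v = 1" "y \<bullet> v = 0"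
  shows "((\<lambda>t. heval h (pt y v t)) has_field_derivative (\<Sum>a\<in>monomials_deg (hdeg h). hcoeff h a * DM y v a t)) (at t)"
    and "\<bar>\<Sum>a\<in>monomials_deg (hdeg h). hcoeff h a * DM y v a t\<bar> \<le> weyl_norm h * sqrt (real (hdeg h))"
proof -
  show "((\<lambda>t. heval h (pt y v t)) has_field_derivative (\<Sum>a\<in>monomials_deg (hdeg h). hcoeff h a * DM y v a t)) (at t)"
    unfolding heval_Mon by (intro DERIV_sum DERIV_cmult DM_deriv)
  show "\<bar>\<Sum>a\<in>monomials_deg (hdeg h). hcoeff h a * DM y v a t\<bar> \<le> weyl_norm h * sqrt (real (hdeg h))"
    using CS_weyl[of h "\<lambda>a. DM y v a t"] DM_sq[OF assms, of "hdeg h" t] by simp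
qed

lemma lipschitz:
  fixes x y :: "real^'n::finite" and h :: "'n hpoly"
  assumes nx: "norm x = 1" and ny: "norm y = 1" and d1: "hdeg h \<ge> 1"
  shows "\<bar>heval h x - heval h y\<bar> \<le> sqrt (real (hdeg h)) * weyl_norm h * dS x y"
proof -
  define c where "c = x \<bullet> y"
  define \<theta> where "\<theta> = arccos c"
  have th: "dS x y = \<theta>" by (simp add: dS_def \<theta>_def c_def)
  have cb: "\<bar>c\<bar> \<le> 1" using Cauchy_Schwarz_ineq2[of x y] nx ny by (simp add: c_def)
  have xx: "x \<bullet> x = 1" and yy: "y \<bullet> y = 1" using nx ny by (simp_all add: dot_square_norm)
  have sd: "sqrt (real (hdeg h)) \<ge> 1" using d1 by simp
  have wn: "weyl_norm h \<ge> 0" by (rule weyl_norm_nonneg)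
  consider "c = 1" | "c = -1" | "-1 < c \<and> c < 1" using cb by linarith
  then show ?thesis
  proof cases
    case 1
    have "norm (x - y)^2 = 0"
      using 1 xx yy by (simp add: power2_norm_eq_inner inner_diff_left inner_diff_right c_def inner_commute)
    then have "x = y" by simp
    then show ?thesis using th wn sd \<theta>_def 1 by simp
  next
    case 2
    then have "\<theta> = pi" by (simp add: \<theta>_def)
    have "\<bar>heval h x - heval h y\<bar> \<le> 2 * weyl_norm h"
      using heval_bound[OF nx, of h] heval_bound[OF ny, of h] by linarith
    also have "\<dots> \<le> pi * weyl_norm h" using wn pi_gt3 by (intro mult_right_mono) auto
    also have "\<dots> \<le> sqrt (real (hdeg h)) * weyl_norm h * pi"
    proof -
      have "weyl_norm h \<le> sqrt (real (hdeg h)) * weyl_norm h"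
        using mult_right_mono[OF sd wn] by simp
      then show ?thesis using pi_gt3 by (simp add: mult.commute)
    qed
    finally show ?thesis using th \<open>\<theta> = pi\<close> by simp
  next
    case 3
    then have tb: "0 < \<theta>" "\<theta> < pi" using arccos_lt_bounded \<theta>_def by auto
    define s where "s = sin \<theta>"
    have sp: "s > 0" using sin_gt_zero tb s_def by auto
    have ct: "cos \<theta> = c" using cb by (simp add: \<theta>_def)
    have ss: "s^2 = 1 - c^2" using ct s_def sin_squared_eq[of \<theta>] by simp
    define v where "v = (1/s) *\<^sub>R (x - c *\<^sub>R y)"
    have yv: "y \<bullet> v = 0"
      by (simp add: v_def inner_diff_right yy c_def inner_commute)
    have "v \<bullet> v = (1/s)^2 * (1 - 2 * c^2 + c^2)"
      by (simp add: v_def inner_diff_right inner_diff_left xx yy c_def inner_commute power2_eq_square algebra_simps)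
    also have "\<dots> = (1/s)^2 * s^2" using ss by simp
    also have "\<dots> = 1" using sp by (simp add: power_divide)
    finally have nv: "norm v = 1" by (simp add: norm_eq_sqrt_inner)
    have p1: "pt y v \<theta> = x" using sp ct s_def by (simp add: pt_def v_def scaleR_diff_right)
    have p0: "pt y v 0 = y" by (simp add: pt_def)
    obtain z where z: "0 < z" "z < \<theta>"
      "heval h (pt y v \<theta>) - heval h (pt y v 0) = (\<theta> - 0) * (\<Sum>a\<in>monomials_deg (hdeg h). hcoeff h a * DM y v a z)"
      using MVT2[OF tb(1), of "\<lambda>t. heval h (pt y v t)" "\<lambda>t. \<Sum>a\<in>monomials_deg (hdeg h). hcoeff h a * DM y v a t", OF deriv_bound(1)[OF ny nv yv]] by blast
    have "\<bar>heval h x - heval h y\<bar> = \<theta> * \<bar>\<Sum>a\<in>monomials_deg (hdeg h). hcoeff h a * DM y v a z\<bar>"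
      using z(3) p0 p1 tb by (simp add: abs_mult)
    also have "\<dots> \<le> \<theta> * (weyl_norm h * sqrt (real (hdeg h)))"
      using deriv_bound(2)[OF ny nv yv] tb by (intro mult_left_mono) auto
    finally show ?thesis using th by (simp add: mult_ac)
  qed
qed

lemma weyl_norm_pos:
  assumes "\<not> hzero h" shows "weyl_norm h > 0"
proof -
  obtain a where a: "a \<in> monomials_deg (hdeg h)" "hcoeff h a \<noteq> 0" using assms by (auto simp: hzero_def)
  have "(\<Sum>a\<in>monomials_deg (hdeg h). (hcoeff h a)\<^sup>2 / multinom (hdeg h) a) > 0"
    using a multinom_pos by (intro sum_pos2[OF finite_monomials_deg a(1)] divide_pos_pos divide_nonneg_pos ballI) auto
  then show ?thesis by (simp add: weyl_norm_def)
qed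

lemma key:
  fixes x y :: "real^'n::finite" and h :: "'n hpoly"
  assumes "norm x = 1" "norm y = 1" "hdeg h \<ge> 1" "\<not> hzero h" "hdeg h \<le> D" "dS x y < r / sqrt (real D)"
  shows "\<bar>heval h x - heval h y\<bar> < weyl_norm h * r"
proof -
  have D: "sqrt (real D) > 0" using assms(3,5) by simp
  have "\<bar>x \<bullet> y\<bar> \<le> 1" using Cauchy_Schwarz_ineq2[of x y] assms(1,2) by simp
  then have th: "dS x y \<ge> 0" unfolding dS_def by (intro arccos_lbound) auto
  have w: "weyl_norm h > 0" using weyl_norm_pos assms(4) by blast
  have "\<bar>heval h x - heval h y\<bar> \<le> sqrt (real (hdeg h)) * weyl_norm h * dS x y"
    by (rule lipschitz) (use assms in auto)
  also have "\<dots> \<le> sqrt (real D) * weyl_norm h * dS x y"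
    using assms(5) th w by (intro mult_right_mono) auto
  also have "\<dots> = weyl_norm h * (sqrt (real D) * dS x y)" by simp
  also have "\<dots> < weyl_norm h * r"
    using assms(6) D w by (intro mult_strict_left_mono) (auto simp: field_simps)
  finally show ?thesis .
qed

theorem proposition4p17:
  fixes F G :: "('n::finite) hpoly list" and r :: real and D :: nat
  assumes "\<forall>h\<in>set (F @ G). hdeg h \<ge> 1"
    and "\<forall>h\<in>set (F @ G). \<not> hzero h"
    and "F @ G \<noteq> []"
    and "D = Max (hdeg ` set (F @ G))"
    and "r > 0"
  shows "U_S (SFG F G) (r / sqrt (real D)) \<subseteq> Approx F G r"
proof
  fix x assume "x \<in> U_S (SFG F G) (r / sqrt (real D))"
  then obtain y where x: "norm x = 1" and y: "y \<in> SFG F G" and dxy: "dS x y < r / sqrt (real D)"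
    by (auto simp: U_S_def sphere_n_def)
  have ny: "norm y = 1" using y by (simp add: SFG_def sphere_n_def)
  have le: "hdeg h \<le> D" if "h \<in> set (F @ G)" for h
    using assms(4) that by simp
  have K: "\<bar>heval h x - heval h y\<bar> < weyl_norm h * r" if "h \<in> set (F @ G)" for h
    using key[OF x ny _ _ le[OF that] dxy] assms(1,2) that by blast
  show "x \<in> Approx F G r"
    unfolding Approx_def sphere_n_def
  proof (intro CollectI conjI ballI)
    show "norm x = 1" by (rule x)
  next
    fix f assume f: "f \<in> set F"
    have "heval f y = 0" using y f by (simp add: SFG_def)
    then show "\<bar>heval f x\<bar> < weyl_norm f * r" using K[of f] f by simp
  next
    fix g assume g: "g \<in> set G"
    have "heval g y \<ge> 0" using y g by (simp add: SFG_def)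
    then show "heval g x > - (weyl_norm g * r)" using K[of g] g by auto
  qed
qed

end
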